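(* Let $G(\pi_i,\pi_i')=\frac12\|\pi_i-\pi_i'\|^2$ and $\mu>0$. Let $K\ge1$, $c>1$, and $$T_\sigma\ge\max\Big(\frac{3}{\ln c}\ln K+\frac{\ln 64}{\ln c},\,1\Big).$$ Let $\sigma^0,\sigma^1,\dots,\sigma^K\in\mathcal X$ satisfy $$\|\pi^{\mu,\sigma^k}-\sigma^{k+1}\|\le\|\pi^{\mu,\sigma^k}-\sigma^k\|\,c^{-T_\sigma}\quad\text{for } k=0,\dots,K-1.$$ Assume $\sqrt{\sum_{i=1}^N\|\nabla_{\pi_i}v_i(\pi)\|^2}\le\zeta$ for all $\pi\in\mathcal X$. Then for any Nash equilibrium $\pi^*\in\Pi^*$, $$\mathrm{exploit}(\sigma^K)\le\frac{2\sqrt2\big((\mu+L)\,\mathrm{diam}(\mathcal X)+\zeta\big)}{\sqrt K}\sqrt{\|\pi^*-\sigma^0\|\Big(8\|\pi^*-\sigma^0\|+\frac\zeta\mu\Big)}.$$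
   Context: Game. Let $N\ge1$. For each $i\in[N]$, $\mathcal X_i\subseteq\mathbb R^{d_i}$ is a nonempty compact convex set, and $\mathcal X=\prod_i\mathcal X_i$. Each $v_i:\mathcal X\to\mathbb R$ is differentiable, with block gradient $\nabla_{\pi_i}v_i$. The norm is Euclidean, with $\|\pi\|^2=\sum_i\|\pi_i\|^2$. The game is monotone: $\sum_i\langle\nabla_{\pi_i}v_i(\pi)-\nabla_{\pi_i}v_i(\pi'),\pi_i-\pi_i'\rangle\le0$ for all $\pi,\pi'$. The game is $L$-smooth: $\sum_i\|\nabla_{\pi_i}v_i(\pi)-\nabla_{\pi_i}v_i(\pi')\|^2\le L^2\|\pi-\pi'\|^2$. A Nash equilibrium is a $\pi^*\in\mathcal X$ with $v_i(\pi^* )\ge v_i(\pi_i,\pi^*_{-i})$ for all $i$ and $\pi_i\in\mathcal X_i$. $\Pi^*$ is the set of Nash equilibria. Exploitability and diameter: $\mathrm{exploit}(\pi)=\sum_i(\max_{\tilde\pi_i\in\mathcal X_i}v_i(\tilde\pi_i,\pi_{-i})-v_i(\pi))$ and $\mathrm{diam}(\mathcal X)=\sup_{\pi,\pi'\in\mathcal X}\|\pi-\pi'\|$. Perturbed equilibrium. For $\mu>0$ and $\sigma\in\mathcal X$, $\pi^{\mu,\sigma}$ is the (unique) profile with $\pi_i^{\mu,\sigma}\in\arg\max_{\pi_i\in\mathcal X_i}\{v_i(\pi_i,\pi^{\mu,\sigma}_{-i})-\mu G(\pi_i,\sigma_i)\}$ for all $i$. *)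

theory Defs
  imports "HOL-Analysis.Analysis"
begin

text \<open>Players are indexed by {..<N}; all strategy spaces are subsets of a common
  Euclidean space 'e. A profile is an extensional function nat => 'e.\<close>

definition profiles :: "nat \<Rightarrow> (nat \<Rightarrow> 'e set) \<Rightarrow> (nat \<Rightarrow> 'e) set" where
  "profiles N X = PiE {..<N} X"

definition pnorm :: "nat \<Rightarrow> (nat \<Rightarrow> 'e::real_normed_vector) \<Rightarrow> real" where
  "pnorm N p = sqrt (\<Sum>i<N. (norm (p i))\<^sup>2)"

definition pdist :: "nat \<Rightarrow> (nat \<Rightarrow> 'e::real_normed_vector) \<Rightarrow> (nat \<Rightarrow> 'e) \<Rightarrow> real" where
  "pdist N p q = pnorm N (\<lambda>i. p i - q i)"

definition diam_prof :: "nat \<Rightarrow> (nat \<Rightarrow> 'e::real_normed_vector set) \<Rightarrow> real" where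
  "diam_prof N X = (SUP pq \<in> profiles N X \<times> profiles N X. pdist N (fst pq) (snd pq))"

definition Greg :: "'e::real_normed_vector \<Rightarrow> 'e \<Rightarrow> real" where
  "Greg x y = (norm (x - y))\<^sup>2 / 2"

definition nash_eq :: "nat \<Rightarrow> (nat \<Rightarrow> 'e set) \<Rightarrow> (nat \<Rightarrow> (nat \<Rightarrow> 'e) \<Rightarrow> real)
    \<Rightarrow> (nat \<Rightarrow> 'e) \<Rightarrow> bool" where
  "nash_eq N X v p \<longleftrightarrow> p \<in> profiles N X \<and>
     (\<forall>i<N. \<forall>x\<in>X i. v i (p(i := x)) \<le> v i p)"

definition perturbed_eq :: "nat \<Rightarrow> (nat \<Rightarrow> 'e::real_normed_vector set)
    \<Rightarrow> (nat \<Rightarrow> (nat \<Rightarrow> 'e) \<Rightarrow> real) \<Rightarrow> real \<Rightarrow> (nat \<Rightarrow> 'e) \<Rightarrow> (nat \<Rightarrow> 'e) \<Rightarrow> bool" where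
  "perturbed_eq N X v \<mu> \<sigma> p \<longleftrightarrow> p \<in> profiles N X \<and>
     (\<forall>i<N. \<forall>x\<in>X i. v i (p(i := x)) - \<mu> * Greg x (\<sigma> i) \<le> v i p - \<mu> * Greg (p i) (\<sigma> i))"

definition exploit :: "nat \<Rightarrow> (nat \<Rightarrow> 'e set) \<Rightarrow> (nat \<Rightarrow> (nat \<Rightarrow> 'e) \<Rightarrow> real)
    \<Rightarrow> (nat \<Rightarrow> 'e) \<Rightarrow> real" where
  "exploit N X v p = (\<Sum>i<N. (SUP x \<in> X i. v i (p(i := x))) - v i p)"

end

theory Submission
  imports Defs
begin

definition ip :: "nat \<Rightarrow> (nat \<Rightarrow> 'e::real_inner) \<Rightarrow> (nat \<Rightarrow> 'e) \<Rightarrow> real" where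
  "ip N p q = (\<Sum>i<N. p i \<bullet> q i)"

lemma ip_diff_left: "ip N (\<lambda>i. a i - b i) c = ip N a c - ip N b c"
  by (simp add: ip_def inner_diff_left sum_subtractf)
lemma ip_diff_right: "ip N c (\<lambda>i. a i - b i) = ip N c a - ip N c b"
  by (simp add: ip_def inner_diff_right sum_subtractf)
lemma ip_commute: "ip N a b = ip N b a"
  by (simp add: ip_def inner_commute)

lemma pnorm_L2: "pnorm N p = L2_set (\<lambda>i. norm (p i)) {..<N}"
  by (simp add: pnorm_def L2_set_def)
lemma pnorm_nonneg: "pnorm N p \<ge> 0"
  by (simp add: pnorm_def sum_nonneg)
lemma pdist_nonneg: "pdist N p q \<ge> 0"
  by (simp add: pdist_def pnorm_nonneg)

lemma pnorm_sq: "(pnorm N p)\<^sup>2 = ip N p p"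
  by (simp add: pnorm_def ip_def sum_nonneg power2_norm_eq_inner)

lemma pdist_sq: "(pdist N p q)\<^sup>2 = ip N (\<lambda>i. p i - q i) (\<lambda>i. p i - q i)"
  by (simp add: pdist_def pnorm_sq)

lemma ip_cs: "ip N p q \<le> pnorm N p * pnorm N q"
proof -
  have "ip N p q \<le> (\<Sum>i<N. \<bar>norm (p i)\<bar> * \<bar>norm (q i)\<bar>)"
    unfolding ip_def by (intro sum_mono) (simp add: norm_cauchy_schwarz)
  also have "\<dots> \<le> pnorm N p * pnorm N q"
    unfolding pnorm_L2 by (rule L2_set_mult_ineq)
  finally show ?thesis .
qed

lemma ip_cs_pdist: "ip N (\<lambda>i. a i - b i) (\<lambda>i. c i - d i) \<le> pdist N a b * pdist N c d"
  unfolding pdist_def by (rule ip_cs)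

lemma pdist_commute: "pdist N p q = pdist N q p"
  unfolding pdist_def pnorm_def by (simp add: norm_minus_commute)

lemma pdist_triangle: "pdist N a c \<le> pdist N a b + pdist N b c"
proof -
  have "pdist N a c = L2_set (\<lambda>i. norm (a i - c i)) {..<N}" by (simp add: pdist_def pnorm_L2)
  also have "\<dots> \<le> L2_set (\<lambda>i. norm (a i - b i) + norm (b i - c i)) {..<N}"
    by (rule L2_set_mono) (auto intro: norm_diff_triangle_le)
  also have "\<dots> \<le> pdist N a b + pdist N b c"
    unfolding pdist_def pnorm_L2 by (rule L2_set_triangle_ineq)
  finally show ?thesis .
qed

lemma prof_upd: "p \<in> profiles N X \<Longrightarrow> i < N \<Longrightarrow> y \<in> X i \<Longrightarrow> p(i := y) \<in> profiles N X"
  unfolding profiles_def using PiE_fun_upd[of y X i p "{..<N}"] by (simp add: insert_absorb)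

lemma prof_mem: "p \<in> profiles N X \<Longrightarrow> i < N \<Longrightarrow> p i \<in> X i"
  unfolding profiles_def by (auto simp: PiE_mem)

lemma vi:
  fixes X :: "nat \<Rightarrow> 'e::euclidean_space set" and grad :: "nat \<Rightarrow> (nat \<Rightarrow> 'e) \<Rightarrow> 'e"
  assumes Xc: "\<And>i. i < N \<Longrightarrow> convex (X i)"
    and v_grad: "\<And>i p. i < N \<Longrightarrow> p \<in> profiles N X \<Longrightarrow>
        ((\<lambda>x. v i (p(i := x))) has_derivative (\<lambda>h. grad i p \<bullet> h)) (at (p i))"
    and pe: "perturbed_eq N X v m s p" and i: "i < N" and x: "x \<in> X i"
  shows "(grad i p - m *\<^sub>R (p i - s i)) \<bullet> (x - p i) \<le> 0"
proof -
  define h where "h = x - p i"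
  define a where "a = p i - s i"
  have pp: "p \<in> profiles N X" using pe by (simp add: perturbed_eq_def)
  define \<phi> where "\<phi> t = v i (p(i := p i + t *\<^sub>R h)) - m * (a \<bullet> a + 2 * t * (a \<bullet> h) + t\<^sup>2 * (h \<bullet> h)) / 2" for t
  have G: "Greg (p i + t *\<^sub>R h) (s i) = (a \<bullet> a + 2 * t * (a \<bullet> h) + t\<^sup>2 * (h \<bullet> h)) / 2" for t
  proof -
    have "p i + t *\<^sub>R h - s i = a + t *\<^sub>R h" by (simp add: a_def)
    then show ?thesis unfolding Greg_def power2_norm_eq_inner
      by (simp add: inner_add_left inner_add_right power2_eq_square inner_commute algebra_simps)
  qed
  have le: "\<phi> t \<le> \<phi> 0" if "0 \<le> t" "t \<le> 1" for t
  proof -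
    have "p i + t *\<^sub>R h = (1 - t) *\<^sub>R p i + t *\<^sub>R x" by (simp add: h_def algebra_simps)
    also have "\<dots> \<in> X i" using Xc[OF i] prof_mem[OF pp i] x that
      unfolding convex_def by auto
    finally have "p i + t *\<^sub>R h \<in> X i" .
    with pe i have "v i (p(i := p i + t *\<^sub>R h)) - m * Greg (p i + t *\<^sub>R h) (s i) \<le> v i p - m * Greg (p i) (s i)"
      unfolding perturbed_eq_def by blast
    moreover have "Greg (p i) (s i) = a \<bullet> a / 2" using G[of 0] by simp
    ultimately show ?thesis unfolding \<phi>_def using G[of t] by simp
  qed
  have d1: "((\<lambda>t. p i + t *\<^sub>R h) has_derivative (\<lambda>t. t *\<^sub>R h)) (at 0)"
    by (auto intro!: derivative_eq_intros)
  have d2: "((\<lambda>x. v i (p(i:=x))) has_derivative (\<lambda>k. grad i p \<bullet> k)) (at (p i + 0 *\<^sub>R h))"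
    using v_grad[OF i pp] by simp
  have "((\<lambda>t. v i (p(i := p i + t *\<^sub>R h))) has_derivative (\<lambda>t. grad i p \<bullet> (t *\<^sub>R h))) (at 0)"
    using has_derivative_compose[OF d1 d2] by simp
  moreover have "(\<lambda>t. grad i p \<bullet> (t *\<^sub>R h)) = (*) (grad i p \<bullet> h)"
    by (auto simp: fun_eq_iff)
  ultimately have dv: "DERIV (\<lambda>t. v i (p(i := p i + t *\<^sub>R h))) 0 :> grad i p \<bullet> h"
    by (simp add: has_field_derivative_def)
  have dphi: "DERIV \<phi> 0 :> grad i p \<bullet> h - m * (a \<bullet> h)"
    unfolding \<phi>_def by (rule derivative_eq_intros dv | simp)+
  have "grad i p \<bullet> h - m * (a \<bullet> h) \<le> 0"
  proof (rule ccontr)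
    assume "\<not> ?thesis"
    then obtain d where d: "d > 0" "\<And>t. t > 0 \<Longrightarrow> t < d \<Longrightarrow> \<phi> 0 < \<phi> (0 + t)"
      using DERIV_pos_inc_right[OF dphi] by force
    have "\<phi> 0 < \<phi> (min (d/2) 1)" using d(2)[of "min (d/2) 1"] d(1) by simp
    moreover have "\<phi> (min (d/2) 1) \<le> \<phi> 0" using d(1) by (intro le) auto
    ultimately show False by simp
  qed
  then show ?thesis by (simp add: h_def a_def inner_diff_left)
qed

lemma conc:
  fixes X :: "nat \<Rightarrow> 'e::euclidean_space set" and grad :: "nat \<Rightarrow> (nat \<Rightarrow> 'e) \<Rightarrow> 'e"
  assumes Xc: "\<And>i. i < N \<Longrightarrow> convex (X i)"
    and v_grad: "\<And>i p. i < N \<Longrightarrow> p \<in> profiles N X \<Longrightarrow>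
        ((\<lambda>x. v i (p(i := x))) has_derivative (\<lambda>h. grad i p \<bullet> h)) (at (p i))"
    and monotone: "\<And>p q. p \<in> profiles N X \<Longrightarrow> q \<in> profiles N X \<Longrightarrow>
        (\<Sum>i<N. (grad i p - grad i q) \<bullet> (p i - q i)) \<le> 0"
    and sp: "\<sigma> \<in> profiles N X" and i: "i < N" and x: "x \<in> X i"
  shows "v i (\<sigma>(i := x)) \<le> v i \<sigma> + grad i \<sigma> \<bullet> (x - \<sigma> i)"
proof -
  define h where "h = x - \<sigma> i"
  define P where "P t = \<sigma>(i := \<sigma> i + t *\<^sub>R h)" for t
  have yin: "\<sigma> i + t *\<^sub>R h \<in> X i" if "0 \<le> t" "t \<le> 1" for t
  proof -
    have "\<sigma> i + t *\<^sub>R h = (1 - t) *\<^sub>R \<sigma> i + t *\<^sub>R x" by (simp add: h_def algebra_simps)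
    also have "\<dots> \<in> X i" using Xc[OF i] prof_mem[OF sp i] x that
      unfolding convex_def by auto
    finally show ?thesis .
  qed
  have Pin: "P t \<in> profiles N X" if "0 \<le> t" "t \<le> 1" for t
    unfolding P_def using prof_upd[OF sp i yin[OF that]] .
  have der: "DERIV (\<lambda>t. v i (\<sigma>(i := \<sigma> i + t *\<^sub>R h))) t :> grad i (P t) \<bullet> h"
    if "0 \<le> t" "t \<le> 1" for t
  proof -
    have d1: "((\<lambda>t. \<sigma> i + t *\<^sub>R h) has_derivative (\<lambda>t. t *\<^sub>R h)) (at t)"
      by (auto intro!: derivative_eq_intros)
    have d2: "((\<lambda>z. v i (\<sigma>(i:=z))) has_derivative (\<lambda>k. grad i (P t) \<bullet> k)) (at (\<sigma> i + t *\<^sub>R h))"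
      using v_grad[OF i Pin[OF that]] by (simp add: P_def)
    have "((\<lambda>t. v i (\<sigma>(i := \<sigma> i + t *\<^sub>R h))) has_derivative (\<lambda>s. grad i (P t) \<bullet> (s *\<^sub>R h))) (at t)"
      using has_derivative_compose[OF d1 d2] by simp
    moreover have "(\<lambda>s. grad i (P t) \<bullet> (s *\<^sub>R h)) = (*) (grad i (P t) \<bullet> h)"
      by (auto simp: fun_eq_iff)
    ultimately show ?thesis by (simp add: has_field_derivative_def)
  qed
  obtain z where z: "0 < z" "z < 1"
    and eq: "v i (\<sigma>(i := \<sigma> i + 1 *\<^sub>R h)) - v i (\<sigma>(i := \<sigma> i + 0 *\<^sub>R h)) = (1 - 0) * (grad i (P z) \<bullet> h)"
    using MVT2[of 0 1 "\<lambda>t. v i (\<sigma>(i := \<sigma> i + t *\<^sub>R h))" "\<lambda>t. grad i (P t) \<bullet> h"] der by auto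
  have m: "(\<Sum>j<N. (grad j (P z) - grad j \<sigma>) \<bullet> (P z j - \<sigma> j)) \<le> 0"
    using monotone[OF Pin sp] z by auto
  have "(\<Sum>j<N. (grad j (P z) - grad j \<sigma>) \<bullet> (P z j - \<sigma> j))
      = (grad i (P z) - grad i \<sigma>) \<bullet> (P z i - \<sigma> i) + (\<Sum>j\<in>{..<N} - {i}. (grad j (P z) - grad j \<sigma>) \<bullet> (P z j - \<sigma> j))"
    using i by (subst sum.remove) auto
  also have "(\<Sum>j\<in>{..<N} - {i}. (grad j (P z) - grad j \<sigma>) \<bullet> (P z j - \<sigma> j)) = 0"
    by (rule sum.neutral) (auto simp: P_def)
  finally have e2: "(\<Sum>j<N. (grad j (P z) - grad j \<sigma>) \<bullet> (P z j - \<sigma> j))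
      = (grad i (P z) - grad i \<sigma>) \<bullet> (P z i - \<sigma> i)" by simp
  have "P z i - \<sigma> i = z *\<^sub>R h" by (simp add: P_def)
  with e2 m have "(grad i (P z) - grad i \<sigma>) \<bullet> (z *\<^sub>R h) \<le> 0" by simp
  then have "z * ((grad i (P z) - grad i \<sigma>) \<bullet> h) \<le> 0" by simp
  then have "(grad i (P z) - grad i \<sigma>) \<bullet> h \<le> 0" using z
    by (simp add: mult_le_0_iff)
  moreover have "\<sigma> i + h = x" by (simp add: h_def)
  ultimately show ?thesis using eq by (simp add: inner_diff_left h_def)
qed

lemma vi_sum:
  fixes X :: "nat \<Rightarrow> 'e::euclidean_space set" and grad :: "nat \<Rightarrow> (nat \<Rightarrow> 'e) \<Rightarrow> 'e"
  assumes Xc: "\<And>i. i < N \<Longrightarrow> convex (X i)"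
    and v_grad: "\<And>i p. i < N \<Longrightarrow> p \<in> profiles N X \<Longrightarrow>
        ((\<lambda>x. v i (p(i := x))) has_derivative (\<lambda>h. grad i p \<bullet> h)) (at (p i))"
    and pe: "perturbed_eq N X v m s p" and q: "q \<in> profiles N X"
  shows "ip N (\<lambda>i. grad i p) (\<lambda>i. q i - p i) \<le> m * ip N (\<lambda>i. p i - s i) (\<lambda>i. q i - p i)"
  unfolding ip_def sum_distrib_left
proof (rule sum_mono)
  fix i assume "i \<in> {..<N}"
  then have i: "i < N" by simp
  have "(grad i p - m *\<^sub>R (p i - s i)) \<bullet> (q i - p i) \<le> 0"
    by (rule vi[OF Xc v_grad pe i prof_mem[OF q i]])
  then show "grad i p \<bullet> (q i - p i) \<le> m * ((p i - s i) \<bullet> (q i - p i))"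
    by (simp add: inner_diff_left)
qed

lemma nash_pe: "nash_eq N X v z \<Longrightarrow> perturbed_eq N X v 0 s z"
  by (simp add: nash_eq_def perturbed_eq_def)

lemma exploit_bound:
  fixes X :: "nat \<Rightarrow> 'e::euclidean_space set" and grad :: "nat \<Rightarrow> (nat \<Rightarrow> 'e) \<Rightarrow> 'e"
  assumes X: "\<And>i. i < N \<Longrightarrow> X i \<noteq> {} \<and> compact (X i) \<and> convex (X i)"
    and v_grad: "\<And>i p. i < N \<Longrightarrow> p \<in> profiles N X \<Longrightarrow>
        ((\<lambda>x. v i (p(i := x))) has_derivative (\<lambda>h. grad i p \<bullet> h)) (at (p i))"
    and monotone: "\<And>p q. p \<in> profiles N X \<Longrightarrow> q \<in> profiles N X \<Longrightarrow>
        (\<Sum>i<N. (grad i p - grad i q) \<bullet> (p i - q i)) \<le> 0"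
    and sp: "\<sigma> \<in> profiles N X"
  shows "\<exists>q\<in>profiles N X. exploit N X v \<sigma> \<le> ip N (\<lambda>i. grad i \<sigma>) (\<lambda>i. q i - \<sigma> i)"
proof -
  have "\<forall>i. \<exists>x. i < N \<longrightarrow> x \<in> X i \<and> (\<forall>y\<in>X i. grad i \<sigma> \<bullet> (y - \<sigma> i) \<le> grad i \<sigma> \<bullet> (x - \<sigma> i))"
  proof
    fix i
    show "\<exists>x. i < N \<longrightarrow> x \<in> X i \<and> (\<forall>y\<in>X i. grad i \<sigma> \<bullet> (y - \<sigma> i) \<le> grad i \<sigma> \<bullet> (x - \<sigma> i))"
    proof (cases "i < N")
      case True
      have "continuous_on (X i) (\<lambda>y. grad i \<sigma> \<bullet> (y - \<sigma> i))"
        by (intro continuous_intros)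
      then show ?thesis using continuous_attains_sup[of "X i" "\<lambda>y. grad i \<sigma> \<bullet> (y - \<sigma> i)"] X[OF True]
        by auto
    qed auto
  qed
  then obtain f where f: "\<And>i. i < N \<Longrightarrow> f i \<in> X i \<and> (\<forall>y\<in>X i. grad i \<sigma> \<bullet> (y - \<sigma> i) \<le> grad i \<sigma> \<bullet> (f i - \<sigma> i))"
    by metis
  define q where "q = restrict f {..<N}"
  have qp: "q \<in> profiles N X" unfolding q_def profiles_def using f by auto
  have "exploit N X v \<sigma> \<le> ip N (\<lambda>i. grad i \<sigma>) (\<lambda>i. q i - \<sigma> i)"
    unfolding exploit_def ip_def
  proof (rule sum_mono)
    fix i assume "i \<in> {..<N}"
    then have i: "i < N" by simp
    have "(SUP x \<in> X i. v i (\<sigma>(i := x))) \<le> v i \<sigma> + grad i \<sigma> \<bullet> (q i - \<sigma> i)"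
    proof (rule cSUP_least)
      show "X i \<noteq> {}" using X[OF i] by simp
      fix x assume x: "x \<in> X i"
      have "v i (\<sigma>(i := x)) \<le> v i \<sigma> + grad i \<sigma> \<bullet> (x - \<sigma> i)"
        by (rule conc[OF _ v_grad monotone sp i x]) (use X in auto)
      also have "\<dots> \<le> v i \<sigma> + grad i \<sigma> \<bullet> (q i - \<sigma> i)"
        using f[OF i] x i by (simp add: q_def)
      finally show "v i (\<sigma>(i := x)) \<le> v i \<sigma> + grad i \<sigma> \<bullet> (q i - \<sigma> i)" .
    qed
    then show "(SUP x \<in> X i. v i (\<sigma>(i := x))) - v i \<sigma> \<le> grad i \<sigma> \<bullet> (q i - \<sigma> i)" by simp
  qed
  with qp show ?thesis by blast
qed

lemma pow_le2: fixes x :: real assumes "0 \<le> x" "real n * x \<le> 1/2" shows "(1 + x)^n \<le> 2"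
proof -
  have "(1 + x)^n \<le> (exp x)^n" using assms(1) by (intro power_mono) (auto simp: exp_ge_add_one_self)
  also have "\<dots> = exp (real n * x)" by (simp add: exp_of_nat_mult)
  also have "\<dots> \<le> exp (1/2)" using assms(2) by simp
  also have "\<dots> \<le> 2" by (rule exp_half_le2)
  finally show ?thesis .
qed

lemma seq_bound:
  fixes r d w :: "nat \<Rightarrow> real" and \<epsilon> :: real and K :: nat
  assumes K: "K \<ge> 1" and e0: "0 \<le> \<epsilon>" and eK: "real K * \<epsilon> \<le> 1/64"
    and rn: "\<And>k. 0 \<le> r k" and dn: "\<And>k. 0 \<le> d k" and wn: "\<And>k. 0 \<le> w k"
    and F1: "\<And>k. k < K \<Longrightarrow> (r k)\<^sup>2 + (w k)\<^sup>2 \<le> (d k)\<^sup>2"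
    and F3: "\<And>k. k < K \<Longrightarrow> d (Suc k) \<le> w k + \<epsilon> * r k"
    and F2: "\<And>k. Suc k < K \<Longrightarrow> r (Suc k) \<le> (1 + 3 * \<epsilon>) * r k"
  shows "real K * (r (K - 1))\<^sup>2 \<le> 8 * (d 0)\<^sup>2"
proof -
  have "1 * \<epsilon> \<le> real K * \<epsilon>" using K e0 by (intro mult_right_mono) auto
  then have e1: "\<epsilon> \<le> 1" using eK by linarith
  have rd: "r k \<le> d k" if "k < K" for k
    using F1[OF that] rn[of k] dn[of k] wn[of k]
    by (smt (verit) power2_le_imp_le zero_le_power2)
  have wd: "w k \<le> d k" if "k < K" for k
    using F1[OF that] rn[of k] dn[of k] wn[of k]
    by (smt (verit) power2_le_imp_le zero_le_power2)
  have dgrow: "d k \<le> (1 + \<epsilon>)^k * d 0" if "k \<le> K" for k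
    using that
  proof (induction k)
    case 0 then show ?case by simp
  next
    case (Suc k)
    then have k: "k < K" by simp
    have "d (Suc k) \<le> w k + \<epsilon> * r k" by (rule F3[OF k])
    also have "\<dots> \<le> d k + \<epsilon> * d k" using wd[OF k] rd[OF k] e0 by (simp add: mult_left_mono add_mono)
    also have "\<dots> = (1 + \<epsilon>) * d k" by (simp add: algebra_simps)
    also have "\<dots> \<le> (1 + \<epsilon>) * ((1 + \<epsilon>)^k * d 0)" using Suc k e0 by (intro mult_left_mono) auto
    finally show ?case by simp
  qed
  have p1: "(1 + \<epsilon>)^K \<le> 2" using eK e0 by (intro pow_le2) auto
  have d2: "d k \<le> 2 * d 0" if "k \<le> K" for k
  proof -
    have "(1 + \<epsilon>)^k \<le> (1 + \<epsilon>)^K" using that e0 by (intro power_increasing) auto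
    then have "(1 + \<epsilon>)^k * d 0 \<le> 2 * d 0" using p1 dn[of 0] by (intro mult_right_mono) auto
    then show ?thesis using dgrow[OF that] by simp
  qed
  have step: "(d (Suc k))\<^sup>2 \<le> (d k)\<^sup>2 - (r k)\<^sup>2 + 12 * \<epsilon> * (d 0)\<^sup>2" if k: "k < K" for k
  proof -
    have "(d (Suc k))\<^sup>2 \<le> (w k + \<epsilon> * r k)\<^sup>2"
      using F3[OF k] dn[of "Suc k"] by (intro power_mono) auto
    also have "\<dots> = (w k)\<^sup>2 + 2 * \<epsilon> * (r k * w k) + \<epsilon> * (\<epsilon> * (r k)\<^sup>2)"
      by (simp add: power2_eq_square algebra_simps)
    also have "\<dots> \<le> ((d k)\<^sup>2 - (r k)\<^sup>2) + 2 * \<epsilon> * (d k)\<^sup>2 + \<epsilon> * (d k)\<^sup>2"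
    proof -
      have a: "r k * w k \<le> (d k)\<^sup>2" using rd[OF k] wd[OF k] rn[of k] wn[of k]
        by (simp add: power2_eq_square mult_mono)
      have b: "\<epsilon> * (r k)\<^sup>2 \<le> (d k)\<^sup>2"
      proof -
        have "\<epsilon> * (r k)\<^sup>2 \<le> 1 * (r k)\<^sup>2" using e1 by (intro mult_right_mono) auto
        also have "\<dots> \<le> (d k)\<^sup>2" using rd[OF k] rn[of k] by (simp add: power_mono)
        finally show ?thesis .
      qed
      have "2 * \<epsilon> * (r k * w k) \<le> 2 * \<epsilon> * (d k)\<^sup>2" using a e0 by (intro mult_left_mono) auto
      moreover have "\<epsilon> * (\<epsilon> * (r k)\<^sup>2) \<le> \<epsilon> * (d k)\<^sup>2" using b e0 by (intro mult_left_mono) auto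
      ultimately show ?thesis using F1[OF k] by linarith
    qed
    also have "\<dots> = (d k)\<^sup>2 - (r k)\<^sup>2 + 3 * \<epsilon> * (d k)\<^sup>2" by (simp add: algebra_simps)
    also have "\<dots> \<le> (d k)\<^sup>2 - (r k)\<^sup>2 + 3 * \<epsilon> * (4 * (d 0)\<^sup>2)"
    proof -
      have "(d k)\<^sup>2 \<le> (2 * d 0)\<^sup>2" using d2[of k] k dn[of k] by (intro power_mono) auto
      then have "(d k)\<^sup>2 \<le> 4 * (d 0)\<^sup>2" by (simp add: power2_eq_square)
      then have "3 * \<epsilon> * (d k)\<^sup>2 \<le> 3 * \<epsilon> * (4 * (d 0)\<^sup>2)" using e0 by (intro mult_left_mono) auto
      then show ?thesis by linarith
    qed
    finally show ?thesis by simp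
  qed
  have tel: "(\<Sum>k<n. (r k)\<^sup>2) + (d n)\<^sup>2 \<le> (d 0)\<^sup>2 + real n * (12 * \<epsilon> * (d 0)\<^sup>2)" if "n \<le> K" for n
    using that
  proof (induction n)
    case 0 then show ?case by simp
  next
    case (Suc n)
    then have "(\<Sum>k<n. (r k)\<^sup>2) + (d n)\<^sup>2 \<le> (d 0)\<^sup>2 + real n * (12 * \<epsilon> * (d 0)\<^sup>2)" by simp
    moreover have "(d (Suc n))\<^sup>2 \<le> (d n)\<^sup>2 - (r n)\<^sup>2 + 12 * \<epsilon> * (d 0)\<^sup>2" using Suc(2) by (intro step) simp
    ultimately show ?case by (simp add: algebra_simps)
  qed
  have sumr: "(\<Sum>k<K. (r k)\<^sup>2) \<le> 2 * (d 0)\<^sup>2"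
  proof -
    have "(\<Sum>k<K. (r k)\<^sup>2) \<le> (d 0)\<^sup>2 + real K * (12 * \<epsilon> * (d 0)\<^sup>2)"
      using tel[of K] zero_le_power2[of "d K"] by linarith
    also have "real K * (12 * \<epsilon> * (d 0)\<^sup>2) = 12 * (real K * \<epsilon>) * (d 0)\<^sup>2" by simp
    also have "\<dots> \<le> 12 * (1/64) * (d 0)\<^sup>2"
    proof -
      have "12 * (real K * \<epsilon>) \<le> 12 * (1/64)" using eK by linarith
      then show ?thesis by (intro mult_right_mono) auto
    qed
    finally show ?thesis using zero_le_power2[of "d 0"] by linarith
  qed
  have p3: "(1 + 3 * \<epsilon>)^K \<le> 2" using eK e0 by (intro pow_le2) auto
  have rgrow: "r (k + j) \<le> (1 + 3 * \<epsilon>)^j * r k" if "k + j < K" for k j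
    using that
  proof (induction j)
    case 0 then show ?case by simp
  next
    case (Suc j)
    then have "r (k + j) \<le> (1 + 3 * \<epsilon>)^j * r k" by simp
    moreover have "r (Suc (k + j)) \<le> (1 + 3 * \<epsilon>) * r (k + j)" using Suc(2) by (intro F2) simp
    ultimately have "r (Suc (k + j)) \<le> (1 + 3 * \<epsilon>) * ((1 + 3 * \<epsilon>)^j * r k)"
      using e0 by (smt (verit) mult_left_mono)
    then show ?case by simp
  qed
  have rlast: "(r (K - 1))\<^sup>2 \<le> 4 * (r k)\<^sup>2" if k: "k < K" for k
  proof -
    have "r (K - 1) = r (k + (K - 1 - k))" using k by simp
    also have "\<dots> \<le> (1 + 3 * \<epsilon>)^(K - 1 - k) * r k" using k by (intro rgrow) simp
    also have "\<dots> \<le> 2 * r k"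
    proof -
      have "(1 + 3 * \<epsilon>)^(K - 1 - k) \<le> (1 + 3 * \<epsilon>)^K" using e0 by (intro power_increasing) auto
      then show ?thesis using p3 rn[of k] by (intro mult_right_mono) auto
    qed
    finally have "r (K - 1) \<le> 2 * r k" .
    then have "(r (K - 1))\<^sup>2 \<le> (2 * r k)\<^sup>2" using rn[of "K - 1"] by (intro power_mono) auto
    then show ?thesis by (simp add: power2_eq_square)
  qed
  have "real K * (r (K - 1))\<^sup>2 = (\<Sum>k<K. (r (K - 1))\<^sup>2)" by simp
  also have "\<dots> \<le> (\<Sum>k<K. 4 * (r k)\<^sup>2)" by (intro sum_mono rlast) simp
  also have "\<dots> = 4 * (\<Sum>k<K. (r k)\<^sup>2)" by (simp add: sum_distrib_left)
  also have "\<dots> \<le> 8 * (d 0)\<^sup>2" using sumr by simp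
  finally show ?thesis .
qed

lemma pdist_le_diam:
  fixes X :: "nat \<Rightarrow> 'e::euclidean_space set"
  assumes X: "\<And>i. i < N \<Longrightarrow> compact (X i)"
    and p: "p \<in> profiles N X" and q: "q \<in> profiles N X"
  shows "pdist N p q \<le> diam_prof N X"
proof -
  have "\<forall>i. \<exists>B. i < N \<longrightarrow> (\<forall>x\<in>X i. norm x \<le> B)"
    using X compact_imp_bounded bounded_iff by metis
  then obtain B where B: "\<And>i x. i < N \<Longrightarrow> x \<in> X i \<Longrightarrow> norm x \<le> B i" by metis
  have bnd: "pdist N a b \<le> (\<Sum>i<N. 2 * B i)" if a: "a \<in> profiles N X" and b: "b \<in> profiles N X" for a b
  proof -
    have "pdist N a b = L2_set (\<lambda>i. norm (a i - b i)) {..<N}" by (simp add: pdist_def pnorm_L2)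
    also have "\<dots> \<le> (\<Sum>i<N. norm (a i - b i))" by (rule L2_set_le_sum) simp
    also have "\<dots> \<le> (\<Sum>i<N. 2 * B i)"
    proof (rule sum_mono)
      fix i assume "i \<in> {..<N}"
      then have i: "i < N" by simp
      have "norm (a i - b i) \<le> norm (a i) + norm (b i)" by (rule norm_triangle_ineq4)
      also have "\<dots> \<le> 2 * B i" using B[OF i prof_mem[OF a i]] B[OF i prof_mem[OF b i]] by simp
      finally show "norm (a i - b i) \<le> 2 * B i" .
    qed
    finally show ?thesis .
  qed
  have "bdd_above ((\<lambda>pq. pdist N (fst pq) (snd pq)) ` (profiles N X \<times> profiles N X))"
    by (rule bdd_aboveI2[where M="\<Sum>i<N. 2 * B i"]) (auto intro: bnd)
  then show ?thesis unfolding diam_prof_def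
    using cSUP_upper[of "(p, q)" "profiles N X \<times> profiles N X" "\<lambda>pq. pdist N (fst pq) (snd pq)"] p q
    by simp
qed

lemma quad:
  fixes r s \<epsilon> :: real
  assumes "0 \<le> r" "0 \<le> s" "0 \<le> \<epsilon>" and h: "s\<^sup>2 \<le> r * s + r * (\<epsilon> * r) + s * (\<epsilon> * r)"
  shows "s \<le> (1 + 3 * \<epsilon>) * r"
proof (rule ccontr)
  assume "\<not> ?thesis"
  then have a: "s > (1 + 3 * \<epsilon>) * r" by simp
  have sr: "s \<ge> r" using a assms by (smt (verit) mult_le_cancel_right1)
  have sp: "s > 0" using a assms by (smt (verit) mult_nonneg_nonneg)
  have b: "s - (1 + \<epsilon>) * r > 2 * \<epsilon> * r" using a by (simp add: algebra_simps)
  have "s * (s - (1 + \<epsilon>) * r) > s * (2 * \<epsilon> * r)" using b sp by (rule mult_strict_left_mono)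
  moreover have "s * (2 * \<epsilon> * r) \<ge> r * (2 * \<epsilon> * r)" using sr assms by (intro mult_right_mono) auto
  ultimately have "s * (s - (1 + \<epsilon>) * r) > r * (2 * \<epsilon> * r)" by linarith
  moreover have "r * (2 * \<epsilon> * r) \<ge> r * (\<epsilon> * r)" using assms by (simp add: mult_left_mono mult_right_mono)
  ultimately show False using h by (simp add: power2_eq_square algebra_simps)
qed

theorem theorem6:
  fixes N :: nat and X :: "nat \<Rightarrow> 'e::euclidean_space set"
    and v :: "nat \<Rightarrow> (nat \<Rightarrow> 'e) \<Rightarrow> real"
    and grad :: "nat \<Rightarrow> (nat \<Rightarrow> 'e) \<Rightarrow> 'e"
    and L \<mu> \<zeta> c T :: real and K :: nat and \<sigma> :: "nat \<Rightarrow> nat \<Rightarrow> 'e"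
    and \<pi>star :: "nat \<Rightarrow> 'e"
  assumes N: "N \<ge> 1"
    and X: "\<And>i. i < N \<Longrightarrow> X i \<noteq> {} \<and> compact (X i) \<and> convex (X i)"
    and v_cont: "\<And>i. i < N \<Longrightarrow> continuous_on (profiles N X) (v i)"
    and v_grad: "\<And>i p. i < N \<Longrightarrow> p \<in> profiles N X \<Longrightarrow>
        ((\<lambda>x. v i (p(i := x))) has_derivative (\<lambda>h. grad i p \<bullet> h)) (at (p i))"
    and monotone: "\<And>p q. p \<in> profiles N X \<Longrightarrow> q \<in> profiles N X \<Longrightarrow>
        (\<Sum>i<N. (grad i p - grad i q) \<bullet> (p i - q i)) \<le> 0"
    and L_nonneg: "L \<ge> 0"
    and smooth: "\<And>p q. p \<in> profiles N X \<Longrightarrow> q \<in> profiles N X \<Longrightarrow>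
        (\<Sum>i<N. (norm (grad i p - grad i q))\<^sup>2) \<le> L\<^sup>2 * (pdist N p q)\<^sup>2"
    and mu: "\<mu> > 0"
    and K: "K \<ge> 1"
    and c: "c > 1"
    and T: "T \<ge> max (3 / ln c * ln (real K) + ln 64 / ln c) 1"
    and sigma_in: "\<And>k. k \<le> K \<Longrightarrow> \<sigma> k \<in> profiles N X"
    and sigma_step: "\<And>k. k < K \<Longrightarrow> \<exists>p. perturbed_eq N X v \<mu> (\<sigma> k) p \<and>
        pdist N p (\<sigma> (Suc k)) \<le> pdist N p (\<sigma> k) * c powr (- T)"
    and grad_bound: "\<And>p. p \<in> profiles N X \<Longrightarrow> sqrt (\<Sum>i<N. (norm (grad i p))\<^sup>2) \<le> \<zeta>"
    and nash: "nash_eq N X v \<pi>star"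
  shows "exploit N X v (\<sigma> K) \<le>
    2 * sqrt 2 * ((\<mu> + L) * diam_prof N X + \<zeta>) / sqrt (real K) *
    sqrt (pdist N \<pi>star (\<sigma> 0) * (8 * pdist N \<pi>star (\<sigma> 0) + \<zeta> / \<mu>))"
proof -
  have Xc: "\<And>i. i < N \<Longrightarrow> convex (X i)" using X by auto
  have Xk: "\<And>i. i < N \<Longrightarrow> compact (X i)" using X by auto
  have VI: "ip N (\<lambda>i. grad i p) (\<lambda>i. q i - p i) \<le> m * ip N (\<lambda>i. p i - s i) (\<lambda>i. q i - p i)"
    if "perturbed_eq N X v m s p" "q \<in> profiles N X" for m s p q
    apply (rule vi_sum[where N=N and X=X and v=v and grad=grad])
       apply (erule Xc)
      apply (erule (1) v_grad)
     apply (rule that(1))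
    apply (rule that(2))
    done
  define \<epsilon> where "\<epsilon> = c powr (- T)"
  have lnc: "ln c > 0" using c by simp
  have Kr: "real K \<ge> 1" using K by simp
  have TL: "T * ln c \<ge> 3 * ln (real K) + ln 64"
  proof -
    have "(3 / ln c * ln (real K) + ln 64 / ln c) * ln c \<le> T * ln c"
      using T lnc by (intro mult_right_mono) auto
    moreover have "(3 / ln c * ln (real K) + ln 64 / ln c) * ln c = 3 * ln (real K) + ln 64"
      using lnc by (simp add: field_simps)
    ultimately show ?thesis by simp
  qed
  have cT: "c powr T \<ge> 64 * real K ^ 3"
  proof -
    have "ln (64 * real K ^ 3) = ln 64 + 3 * ln (real K)"
      using Kr by (simp add: ln_mult ln_realpow)
    then have "64 * real K ^ 3 = exp (ln 64 + 3 * ln (real K))"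
      using Kr by (metis exp_ln mult_pos_pos zero_less_numeral zero_less_power
          less_le_trans zero_less_one)
    also have "\<dots> \<le> exp (T * ln c)" using TL by simp
    also have "\<dots> = c powr T" using c by (simp add: powr_def)
    finally show ?thesis .
  qed
  have cTp: "c powr T > 0" using c by simp
  have e_eq: "\<epsilon> = 1 / c powr T" by (simp add: \<epsilon>_def powr_minus_divide)
  have e0: "0 \<le> \<epsilon>" using cTp e_eq by simp
  have eK: "real K * \<epsilon> \<le> 1/64"
  proof -
    have "real K * \<epsilon> = real K / c powr T" by (simp add: e_eq)
    also have "\<dots> \<le> real K / (64 * real K ^ 3)"
      using cT Kr cTp by (intro divide_left_mono) (auto simp: zero_less_mult_iff)
    also have "\<dots> = 1 / (64 * real K ^ 2)" using Kr by (simp add: power2_eq_square power3_eq_cube)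
    also have "\<dots> \<le> 1 / 64"
    proof -
      have "1 \<le> real K ^ 2" using Kr by (simp add: one_le_power)
      then show ?thesis by (simp add: divide_simps)
    qed
    finally show ?thesis .
  qed
  have "1 * \<epsilon> \<le> real K * \<epsilon>" using Kr e0 by (intro mult_right_mono) auto
  then have e1: "\<epsilon> \<le> 1" using eK by linarith
  have zeta0: "\<zeta> \<ge> 0"
  proof -
    have "0 \<le> sqrt (\<Sum>i<N. (norm (grad i (\<sigma> 0)))\<^sup>2)" by (simp add: sum_nonneg)
    then show ?thesis using grad_bound[OF sigma_in[of 0]] by linarith
  qed
  have "\<forall>k. \<exists>p. k < K \<longrightarrow> perturbed_eq N X v \<mu> (\<sigma> k) p \<and>
        pdist N p (\<sigma> (Suc k)) \<le> pdist N p (\<sigma> k) * c powr (- T)"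
    using sigma_step by blast
  then obtain P where P0: "\<forall>k. k < K \<longrightarrow> perturbed_eq N X v \<mu> (\<sigma> k) (P k) \<and>
        pdist N (P k) (\<sigma> (Suc k)) \<le> pdist N (P k) (\<sigma> k) * c powr (- T)"
    by (rule choice[THEN exE])
  have P: "perturbed_eq N X v \<mu> (\<sigma> k) (P k) \<and>
        pdist N (P k) (\<sigma> (Suc k)) \<le> pdist N (P k) (\<sigma> k) * \<epsilon>" if "k < K" for k
    using P0 that unfolding \<epsilon>_def by blast
  have Pp: "P k \<in> profiles N X" if "k < K" for k
    using P[OF that] by (simp add: perturbed_eq_def)
  have zp: "\<pi>star \<in> profiles N X" using nash by (simp add: nash_eq_def)
  have sp: "\<sigma> k \<in> profiles N X" if "k < K" for k using sigma_in that by simp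
  have mono_ip: "ip N (\<lambda>i. grad i p - grad i q) (\<lambda>i. p i - q i) \<le> 0"
    if "p \<in> profiles N X" "q \<in> profiles N X" for p q
    using monotone[OF that] by (simp add: ip_def)
  define r where "r k = pdist N (P k) (\<sigma> k)" for k
  define d where "d k = pdist N \<pi>star (\<sigma> k)" for k
  define w where "w k = pdist N \<pi>star (P k)" for k
  have F1: "(r k)\<^sup>2 + (w k)\<^sup>2 \<le> (d k)\<^sup>2" if k: "k < K" for k
  proof -
    let ?p = "P k" and ?s = "\<sigma> k" and ?z = \<pi>star
    have A: "ip N (\<lambda>i. grad i ?p) (\<lambda>i. ?z i - ?p i) \<le> \<mu> * ip N (\<lambda>i. ?p i - ?s i) (\<lambda>i. ?z i - ?p i)"
      using VI[OF conjunct1[OF P[OF k]] zp] .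
    have B: "ip N (\<lambda>i. grad i ?z) (\<lambda>i. ?p i - ?z i) \<le> 0 * ip N (\<lambda>i. ?z i - ?s i) (\<lambda>i. ?p i - ?z i)"
      using VI[OF nash_pe[OF nash] Pp[OF k]] .
    have M: "ip N (\<lambda>i. grad i ?p - grad i ?z) (\<lambda>i. ?p i - ?z i) \<le> 0"
      using mono_ip[OF Pp[OF k] zp] .
    have "ip N (\<lambda>i. grad i ?p) (\<lambda>i. ?z i - ?p i) \<ge> 0"
      using B M unfolding ip_diff_left ip_diff_right by simp
    with A have "\<mu> * ip N (\<lambda>i. ?p i - ?s i) (\<lambda>i. ?z i - ?p i) \<ge> 0" by linarith
    then have X0: "ip N (\<lambda>i. ?p i - ?s i) (\<lambda>i. ?z i - ?p i) \<ge> 0"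
      using mu by (simp add: zero_le_mult_iff)
    show ?thesis
      unfolding r_def w_def d_def pdist_sq
      using X0 ip_commute[of N ?z ?s] ip_commute[of N ?p ?s] ip_commute[of N ?z ?p]
      unfolding ip_diff_left ip_diff_right by linarith
  qed
  have F3: "d (Suc k) \<le> w k + \<epsilon> * r k" if k: "k < K" for k
  proof -
    have "d (Suc k) \<le> pdist N \<pi>star (P k) + pdist N (P k) (\<sigma> (Suc k))"
      unfolding d_def by (rule pdist_triangle)
    then show ?thesis using P[OF k] unfolding w_def r_def by (simp add: mult.commute)
  qed
  have F2: "r (Suc k) \<le> (1 + 3 * \<epsilon>) * r k" if k1: "Suc k < K" for k
  proof -
    have k: "k < K" using k1 by simp
    let ?x = "\<sigma> k" and ?y = "\<sigma> (Suc k)" and ?a = "P k" and ?b = "P (Suc k)"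
    have A: "ip N (\<lambda>i. grad i ?a) (\<lambda>i. ?b i - ?a i) \<le> \<mu> * ip N (\<lambda>i. ?a i - ?x i) (\<lambda>i. ?b i - ?a i)"
      using VI[OF conjunct1[OF P[OF k]] Pp[OF k1]] .
    have B: "ip N (\<lambda>i. grad i ?b) (\<lambda>i. ?a i - ?b i) \<le> \<mu> * ip N (\<lambda>i. ?b i - ?y i) (\<lambda>i. ?a i - ?b i)"
      using VI[OF conjunct1[OF P[OF k1]] Pp[OF k]] .
    have M: "ip N (\<lambda>i. grad i ?a - grad i ?b) (\<lambda>i. ?a i - ?b i) \<le> 0"
      using mono_ip[OF Pp[OF k] Pp[OF k1]] .
    have "ip N (\<lambda>i. grad i ?a) (\<lambda>i. ?b i - ?a i) + ip N (\<lambda>i. grad i ?b) (\<lambda>i. ?a i - ?b i) \<ge> 0"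
      using M unfolding ip_diff_left ip_diff_right by simp
    with A B have "\<mu> * (ip N (\<lambda>i. ?a i - ?x i) (\<lambda>i. ?b i - ?a i) + ip N (\<lambda>i. ?b i - ?y i) (\<lambda>i. ?a i - ?b i)) \<ge> 0"
      by (simp add: distrib_left)
    then have Q: "ip N (\<lambda>i. ?a i - ?x i) (\<lambda>i. ?b i - ?a i) + ip N (\<lambda>i. ?b i - ?y i) (\<lambda>i. ?a i - ?b i) \<ge> 0"
      using mu by (simp add: zero_le_mult_iff)
    have CS1: "ip N (\<lambda>i. ?a i - ?x i) (\<lambda>i. ?b i - ?y i) \<le> r k * r (Suc k)"
      unfolding r_def by (rule ip_cs_pdist)
    have CS2: "ip N (\<lambda>i. ?a i - ?x i) (\<lambda>i. ?y i - ?a i) \<le> r k * pdist N ?y ?a"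
      unfolding r_def by (rule ip_cs_pdist)
    have CS3: "ip N (\<lambda>i. ?y i - ?b i) (\<lambda>i. ?y i - ?a i) \<le> r (Suc k) * pdist N ?y ?a"
      unfolding r_def using ip_cs_pdist[of N ?y ?b ?y ?a] by (simp add: pdist_commute)
    have ea: "pdist N ?y ?a \<le> \<epsilon> * r k" using P[OF k] unfolding r_def by (simp add: pdist_commute mult.commute)
    have rn: "r j \<ge> 0" for j unfolding r_def by (rule pdist_nonneg)
    have "(r (Suc k))\<^sup>2 \<le> r k * r (Suc k) + r k * pdist N ?y ?a + r (Suc k) * pdist N ?y ?a"
      unfolding r_def pdist_sq
      using Q CS1[unfolded r_def] CS2[unfolded r_def] CS3[unfolded r_def]
        ip_commute[of N ?x ?y] ip_commute[of N ?x ?a] ip_commute[of N ?x ?b]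
        ip_commute[of N ?y ?a] ip_commute[of N ?y ?b] ip_commute[of N ?a ?b]
      unfolding ip_diff_left ip_diff_right by linarith
    also have "\<dots> \<le> r k * r (Suc k) + r k * (\<epsilon> * r k) + r (Suc k) * (\<epsilon> * r k)"
      using ea rn[of k] rn[of "Suc k"] by (intro add_mono mult_left_mono) auto
    finally show ?thesis by (intro quad rn e0)
  qed
  have rn: "r j \<ge> 0" for j unfolding r_def by (rule pdist_nonneg)
  have dn: "d j \<ge> 0" for j unfolding d_def by (rule pdist_nonneg)
  have wn: "w j \<ge> 0" for j unfolding w_def by (rule pdist_nonneg)
  have SB: "real K * (r (K - 1))\<^sup>2 \<le> 8 * (d 0)\<^sup>2"
    by (rule seq_bound[where r=r and d=d and w=w and \<epsilon>=\<epsilon> and K=K, OF K e0 eK rn dn wn F1 F3 F2])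
  define D where "D = diam_prof N X"
  have Dle: "pdist N p q \<le> D" if "p \<in> profiles N X" "q \<in> profiles N X" for p q
    unfolding D_def by (rule pdist_le_diam[OF Xk that])
  have D0: "D \<ge> 0" using Dle[OF zp zp] pdist_nonneg[of N \<pi>star \<pi>star] by linarith
  define k0 where "k0 = K - 1"
  have k0: "k0 < K" "Suc k0 = K" using K by (auto simp: k0_def)
  let ?S = "\<sigma> K" and ?p = "P k0" and ?s = "\<sigma> k0"
  have SS: "?S \<in> profiles N X" using sigma_in by simp
  obtain q where qp: "q \<in> profiles N X" and ex: "exploit N X v ?S \<le> ip N (\<lambda>i. grad i ?S) (\<lambda>i. q i - ?S i)"
    using exploit_bound[OF X v_grad monotone SS] by blast
  have split: "ip N (\<lambda>i. grad i ?S) (\<lambda>i. q i - ?S i) =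
      ip N (\<lambda>i. grad i ?S - grad i ?p) (\<lambda>i. q i - ?S i) + ip N (\<lambda>i. grad i ?p) (\<lambda>i. q i - ?p i)
      + ip N (\<lambda>i. grad i ?p) (\<lambda>i. ?p i - ?S i)"
    unfolding ip_diff_left ip_diff_right by simp
  have pS: "pdist N ?p ?S \<le> \<epsilon> * r k0" using P[OF k0(1)] k0(2) unfolding r_def by (simp add: mult.commute)
  have T1: "ip N (\<lambda>i. grad i ?S - grad i ?p) (\<lambda>i. q i - ?S i) \<le> L * (\<epsilon> * r k0) * D"
  proof -
    have "ip N (\<lambda>i. grad i ?S - grad i ?p) (\<lambda>i. q i - ?S i) \<le> pnorm N (\<lambda>i. grad i ?S - grad i ?p) * pdist N q ?S"
      unfolding pdist_def by (rule ip_cs)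
    also have "\<dots> \<le> (L * (\<epsilon> * r k0)) * D"
    proof (rule mult_mono)
      have "pnorm N (\<lambda>i. grad i ?S - grad i ?p) \<le> sqrt (L\<^sup>2 * (pdist N ?S ?p)\<^sup>2)"
        unfolding pnorm_def using smooth[OF SS Pp[OF k0(1)]] by simp
      also have "\<dots> = L * pdist N ?S ?p" using L_nonneg pdist_nonneg[of N ?S ?p]
        by (simp add: real_sqrt_mult)
      also have "\<dots> \<le> L * (\<epsilon> * r k0)" using pS L_nonneg by (simp add: pdist_commute mult_left_mono)
      finally show "pnorm N (\<lambda>i. grad i ?S - grad i ?p) \<le> L * (\<epsilon> * r k0)" .
      show "pdist N q ?S \<le> D" by (rule Dle[OF qp SS])
      show "0 \<le> L * (\<epsilon> * r k0)" using L_nonneg e0 rn[of k0] by simp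
      show "0 \<le> pdist N q ?S" by (rule pdist_nonneg)
    qed
    finally show ?thesis .
  qed
  have T2: "ip N (\<lambda>i. grad i ?p) (\<lambda>i. q i - ?p i) \<le> \<mu> * (r k0 * D)"
  proof -
    have "ip N (\<lambda>i. grad i ?p) (\<lambda>i. q i - ?p i) \<le> \<mu> * ip N (\<lambda>i. ?p i - ?s i) (\<lambda>i. q i - ?p i)"
      using VI[OF conjunct1[OF P[OF k0(1)]] qp] .
    also have "ip N (\<lambda>i. ?p i - ?s i) (\<lambda>i. q i - ?p i) \<le> r k0 * pdist N q ?p"
      unfolding r_def by (rule ip_cs_pdist)
    also have "\<dots> \<le> r k0 * D" using Dle[OF qp Pp[OF k0(1)]] rn[of k0] by (simp add: mult_left_mono)
    finally show ?thesis using mu by (simp add: mult_left_mono)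
  qed
  have T3: "ip N (\<lambda>i. grad i ?p) (\<lambda>i. ?p i - ?S i) \<le> \<zeta> * (\<epsilon> * r k0)"
  proof -
    have "ip N (\<lambda>i. grad i ?p) (\<lambda>i. ?p i - ?S i) \<le> pnorm N (\<lambda>i. grad i ?p) * pdist N ?p ?S"
      unfolding pdist_def by (rule ip_cs)
    also have "\<dots> \<le> \<zeta> * (\<epsilon> * r k0)"
      using grad_bound[OF Pp[OF k0(1)]] pS zeta0 pnorm_nonneg[of N "\<lambda>i. grad i ?p"] pdist_nonneg[of N ?p ?S]
      unfolding pnorm_def by (intro mult_mono) (use zeta0 in auto)
    finally show ?thesis .
  qed
  define C where "C = (\<mu> + L) * D + \<zeta>"
  have C0: "C \<ge> 0" using mu L_nonneg D0 zeta0 by (simp add: C_def)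
  have exC: "exploit N X v ?S \<le> C * r k0"
  proof -
    have er: "\<epsilon> * r k0 \<le> r k0" using rn[of k0] e0 e1 by (rule mult_left_le_one_le)
    have "L * (\<epsilon> * r k0) * D \<le> L * r k0 * D"
      using er L_nonneg D0 by (intro mult_right_mono mult_left_mono) auto
    moreover have "\<zeta> * (\<epsilon> * r k0) \<le> \<zeta> * r k0"
      using er zeta0 by (intro mult_left_mono) auto
    ultimately show ?thesis using ex split T1 T2 T3 unfolding C_def by (simp add: algebra_simps)
  qed
  define d0 where "d0 = pdist N \<pi>star (\<sigma> 0)"
  have d00: "d0 \<ge> 0" unfolding d0_def by (rule pdist_nonneg)
  have Kp: "real K > 0" using Kr by simp
  have Y: "(r k0)\<^sup>2 \<le> 8 * (d0 * (8 * d0 + \<zeta> / \<mu>)) / real K"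
  proof -
    have "(r k0)\<^sup>2 \<le> 8 * d0\<^sup>2 / real K" using SB Kp unfolding d_def d0_def k0_def
      by (simp add: divide_simps mult.commute)
    also have "\<dots> \<le> 8 * (d0 * (8 * d0 + \<zeta> / \<mu>)) / real K"
    proof -
      have "d0\<^sup>2 \<le> d0 * (8 * d0 + \<zeta> / \<mu>)"
        using d00 zeta0 mu by (simp add: power2_eq_square mult_left_mono)
      then show ?thesis using Kp by (simp add: divide_right_mono)
    qed
    finally show ?thesis .
  qed
  have rb: "r k0 \<le> 2 * sqrt 2 / sqrt (real K) * sqrt (d0 * (8 * d0 + \<zeta> / \<mu>))"
  proof -
    have "r k0 \<le> sqrt (8 * (d0 * (8 * d0 + \<zeta> / \<mu>)) / real K)"
      by (rule real_le_rsqrt[OF Y])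
    also have "\<dots> = sqrt 8 * sqrt (d0 * (8 * d0 + \<zeta> / \<mu>)) / sqrt (real K)"
      by (simp add: real_sqrt_mult real_sqrt_divide)
    also have "sqrt 8 = 2 * sqrt (2::real)"
    proof -
      have "sqrt 8 = sqrt (2\<^sup>2 * 2::real)" by simp
      also have "\<dots> = 2 * sqrt 2" by (simp only: real_sqrt_mult real_sqrt_abs)
      finally show ?thesis .
    qed
    finally show ?thesis by simp
  qed
  have "exploit N X v ?S \<le> C * (2 * sqrt 2 / sqrt (real K) * sqrt (d0 * (8 * d0 + \<zeta> / \<mu>)))"
    using exC mult_left_mono[OF rb C0] by linarith
  then show ?thesis unfolding C_def D_def d0_def by (simp add: mult_ac)
qed

end
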